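(* Let $p\in P(k,l)\setminus N(k,l)$ be a pairing with $s=(k+l)/2\ge 4$ strings. (1) If $p\notin E(k,l)$, then some capping $p'$ of $p$ satisfies $p'\notin E$ (i.e. $p'$ is a pairing not in $E$ of the corresponding size). (2) If $p\in E(k,l)\setminus N(k,l)$, then some capping $p'$ of $p$ satisfies $p'\in E\setminus N$.
   Context: $P(k,l)$ is the set of pairings (partitions into 2-element blocks, called strings) of $k$ upper and $l$ lower points; the $k+l$ points are numbered $1,\dots,k+l$ counterclockwise starting from the bottom left, and considered cyclically (as points on the boundary of a disk). Two strings $\{a,b\},\{c,d\}$ cross iff exactly one of $c,d$ lies strictly between $a$ and $b$. $E(k,l)\subset P(k,l)$ consists of the pairings in which each string crosses an even number of other strings; $N(k,l)\subset E(k,l)$ consists of the noncrossing pairings (no two strings cross). For $i=1,\dots,k+l$ (indices mod $k+l$), the capping $p^i$ is the pairing of the remaining $k+l-2$ points obtained by joining the $i$-th and $(i+1)$-th points by a semicircle and deleting these two points, so that the strings through them are concatenated into one string (a closed loop, if it arises, is discarded), the remaining points keeping their cyclic order. A capping of $p$ is any $p^i$. *)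

theory Defs
  imports Main
begin

text \<open>Points are numbered 1..n, n = k+l. A pairing is a set of 2-element blocks (strings)
partitioning {1..n}. All notions below (crossing, E, N, capping) depend on k and l only
through n = k+l.\<close>

definition is_pairing :: "nat \<Rightarrow> nat set set \<Rightarrow> bool" where
  "is_pairing n p \<longleftrightarrow> (\<forall>s\<in>p. card s = 2 \<and> s \<subseteq> {1..n}) \<and> (\<forall>x\<in>{1..n}. \<exists>!s. s \<in> p \<and> x \<in> s)"

definition strictly_between :: "nat \<Rightarrow> nat \<Rightarrow> nat \<Rightarrow> bool" where
  "strictly_between a b x \<longleftrightarrow> min a b < x \<and> x < max a b"

definition crosses :: "nat set \<Rightarrow> nat set \<Rightarrow> bool" where
  "crosses s t \<longleftrightarrow> (\<exists>a b c d. s = {a, b} \<and> t = {c, d} \<and>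
      (strictly_between a b c \<noteq> strictly_between a b d))"

definition Pn :: "nat \<Rightarrow> nat set set set" where
  "Pn n = {p. is_pairing n p}"

definition En :: "nat \<Rightarrow> nat set set set" where
  "En n = {p \<in> Pn n. \<forall>s\<in>p. even (card {t \<in> p. t \<noteq> s \<and> crosses s t})}"

definition Nn :: "nat \<Rightarrow> nat set set set" where
  "Nn n = {p \<in> Pn n. \<forall>s\<in>p. \<forall>t\<in>p. \<not> crosses s t}"

definition P :: "nat \<Rightarrow> nat \<Rightarrow> nat set set set" where
  "P k l = Pn (k + l)"

definition E :: "nat \<Rightarrow> nat \<Rightarrow> nat set set set" where
  "E k l = En (k + l)"

definition N :: "nat \<Rightarrow> nat \<Rightarrow> nat set set set" where
  "N k l = Nn (k + l)"

definition csucc :: "nat \<Rightarrow> nat \<Rightarrow> nat" where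
  "csucc n i = (if i = n then 1 else i + 1)"

definition partner :: "nat set set \<Rightarrow> nat \<Rightarrow> nat" where
  "partner p x = (THE y. {x, y} \<in> p)"

text \<open>capping p^i of a pairing p on n points: join points i and i+1 (mod n), concatenate the
strings through them (discarding a closed loop), delete the two points and renumber the
remaining points 1..n-2 in order (cyclic order is preserved).\<close>
definition capping :: "nat \<Rightarrow> nat set set \<Rightarrow> nat \<Rightarrow> nat set set" where
  "capping n p i =
     (let j = csucc n i; a = partner p i; b = partner p j;
          q = (p - {{i, a}, {j, b}}) \<union> (if a = j then {} else {{a, b}});
          r = (\<lambda>x. card {y \<in> {1..n} - {i, j}. y \<le> x})
      in (\<lambda>s. r ` s) ` q)"

end

theory Submission
  imports Defs
begin


abbreviation sb where "sb \<equiv> strictly_between"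

lemma sb_sym: "sb a b x = sb b a x"
  by (auto simp: strictly_between_def)

lemma crosses_iff: "crosses {a,b} {c,d} \<longleftrightarrow> (sb a b c \<noteq> sb a b d)"
  unfolding crosses_def by (auto simp: doubleton_eq_iff sb_sym)

lemma crosses_sym4: "distinct [a,b,c,d] \<Longrightarrow> (sb a b c \<noteq> sb a b d) = (sb c d a \<noteq> sb c d b)"
  by (auto simp: strictly_between_def min_def max_def)

lemma sb_adj: "i \<in> {1..n} \<Longrightarrow> c \<in> {1..n} \<Longrightarrow> d \<in> {1..n} \<Longrightarrow> c \<notin> {i, csucc n i} \<Longrightarrow> d \<notin> {i, csucc n i}
  \<Longrightarrow> sb c d i = sb c d (csucc n i)"
  by (auto simp: strictly_between_def min_def max_def csucc_def)




definition pairing_on :: "nat set \<Rightarrow> nat set set \<Rightarrow> bool" where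
  "pairing_on D p \<longleftrightarrow> (\<forall>s\<in>p. card s = 2 \<and> s \<subseteq> D) \<and> (\<forall>x\<in>D. \<exists>!s. s \<in> p \<and> x \<in> s)"

lemma is_pairing_on: "is_pairing n p = pairing_on {1..n} p"
  by (simp add: is_pairing_def pairing_on_def)

lemma po_card: "pairing_on D p \<Longrightarrow> s \<in> p \<Longrightarrow> card s = 2"
  by (simp add: pairing_on_def)
lemma po_sub: "pairing_on D p \<Longrightarrow> s \<in> p \<Longrightarrow> s \<subseteq> D"
  by (simp add: pairing_on_def)

lemma po_uniq: "pairing_on D p \<Longrightarrow> s \<in> p \<Longrightarrow> t \<in> p \<Longrightarrow> x \<in> s \<Longrightarrow> x \<in> t \<Longrightarrow> s = t"
  unfolding pairing_on_def by blast

lemma po_two: "pairing_on D p \<Longrightarrow> s \<in> p \<Longrightarrow> \<exists>x y. s = {x,y} \<and> x \<noteq> y"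
  by (metis po_card card_2_iff)

lemma po_ex: "pairing_on D p \<Longrightarrow> x \<in> D \<Longrightarrow> \<exists>s\<in>p. x \<in> s"
  unfolding pairing_on_def by blast

lemma po_partner_eq: assumes "pairing_on D p" "{x,y} \<in> p" shows "partner p x = y"
proof -
  have xy: "x \<noteq> y" using po_card[OF assms] by (cases "x = y", auto)
  have "\<And>z. {x,z} \<in> p \<Longrightarrow> z = y"
  proof -
    fix z assume z: "{x,z} \<in> p"
    have "{x,z} = {x,y}" using po_uniq[OF assms(1) z assms(2), of x] by simp
    moreover have "z \<noteq> x" using po_card[OF assms(1) z] by (cases "x = z", auto)
    ultimately show "z = y" by (auto simp: doubleton_eq_iff)
  qed
  then show ?thesis unfolding partner_def using assms(2) by (metis the_equality)
qed

lemma po_partner: assumes "pairing_on D p" "x \<in> D"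
  shows "{x, partner p x} \<in> p" "partner p x \<noteq> x" "partner p x \<in> D"
proof -
  obtain s where s: "s \<in> p" "x \<in> s" using po_ex[OF assms] by blast
  obtain u v where uv: "s = {u,v}" "u \<noteq> v" using po_two[OF assms(1) s(1)] by blast
  obtain y where y: "s = {x,y}" "y \<noteq> x" using uv s(2) by auto
  have "partner p x = y" using po_partner_eq[OF assms(1)] y s by simp
  then show "{x, partner p x} \<in> p" "partner p x \<noteq> x" "partner p x \<in> D"
    using y s po_sub[OF assms(1) s(1)] by auto
qed

lemma po_string_eq: assumes "pairing_on D p" "s \<in> p" "x \<in> s" shows "s = {x, partner p x}"
proof -
  have "x \<in> D" using po_sub[OF assms(1,2)] assms(3) by auto
  then show ?thesis using po_uniq[OF assms(1,2) po_partner(1)[OF assms(1)], of x] assms(3) by auto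
qed

lemma po_finite: "finite D \<Longrightarrow> pairing_on D p \<Longrightarrow> finite p"
  by (metis PowI finite_Pow_iff po_sub rev_finite_subset subsetI)

definition cnt :: "nat set set \<Rightarrow> nat set \<Rightarrow> nat" where
  "cnt p s = card {t \<in> p. t \<noteq> s \<and> crosses s t}"

lemma En_iff: "En n = {p. pairing_on {1..n} p \<and> (\<forall>s\<in>p. even (cnt p s))}"
  by (auto simp: En_def Pn_def is_pairing_on cnt_def)

lemma Nn_iff: "Nn n = {p. pairing_on {1..n} p \<and> (\<forall>s\<in>p. \<forall>t\<in>p. \<not> crosses s t)}"
  by (auto simp: Nn_def Pn_def is_pairing_on)




locale cap =
  fixes n :: nat and p :: "nat set set" and i :: nat
  assumes P: "pairing_on {1..n} p" and n3: "n \<ge> 3" and iin: "i \<in> {1..n}"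
begin

definition "cj = csucc n i"
definition "ca = partner p i"
definition "cb = partner p cj"
definition "cD = {1..n} - {i, cj}"
definition "cq = (p - {{i, ca}, {cj, cb}}) \<union> (if ca = cj then {} else {{ca, cb}})"
definition "cr = (\<lambda>x. card {y \<in> cD. y \<le> x})"

lemma capping_eq: "capping n p i = (\<lambda>s. cr ` s) ` cq"
  unfolding capping_def Let_def cj_def ca_def cb_def cD_def cq_def cr_def by simp

lemma jin: "cj \<in> {1..n}" and ij: "i \<noteq> cj"
  using iin n3 by (auto simp: cj_def csucc_def)

lemma fin: "finite p" using po_finite[OF _ P] by simp

lemma ia: "{i, ca} \<in> p" "ca \<noteq> i" "ca \<in> {1..n}"
  using po_partner[OF P iin] by (auto simp: ca_def)
lemma jb: "{cj, cb} \<in> p" "cb \<noteq> cj" "cb \<in> {1..n}"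
  using po_partner[OF P jin] by (auto simp: cb_def)

lemma str_i: "s \<in> p \<Longrightarrow> i \<in> s \<Longrightarrow> s = {i, ca}"
  using po_uniq[OF P _ ia(1)] by blast
lemma str_a: "s \<in> p \<Longrightarrow> ca \<in> s \<Longrightarrow> s = {i, ca}"
  using po_uniq[OF P _ ia(1)] by blast
lemma str_j: "s \<in> p \<Longrightarrow> cj \<in> s \<Longrightarrow> s = {cj, cb}"
  using po_uniq[OF P _ jb(1)] by blast
lemma str_b: "s \<in> p \<Longrightarrow> cb \<in> s \<Longrightarrow> s = {cj, cb}"
  using po_uniq[OF P _ jb(1)] by blast

lemma aj_case: "ca = cj \<Longrightarrow> cb = i"
  using str_j[OF ia(1)] ij jb(2) by (auto simp: doubleton_eq_iff)

lemma distinct4: "ca \<noteq> cj \<Longrightarrow> distinct [i, cj, ca, cb]"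
proof -
  assume h: "ca \<noteq> cj"
  have "cb \<noteq> i" using str_i[OF jb(1)] h ij by (auto simp: doubleton_eq_iff)
  moreover have "ca \<noteq> cb" using str_b[OF ia(1)] h ij ia(2) by (auto simp: doubleton_eq_iff)
  ultimately show ?thesis using ij ia(2) jb(2) h by auto
qed

lemma old_disj: assumes "s \<in> cq" "s \<noteq> {ca, cb}"
  shows "s \<in> p" "i \<notin> s" "cj \<notin> s" "ca \<notin> s" "cb \<notin> s"
proof -
  show sp: "s \<in> p" using assms by (auto simp: cq_def split: if_splits)
  have ne: "s \<noteq> {i, ca}" "s \<noteq> {cj, cb}" using assms by (auto simp: cq_def split: if_splits)
  show "i \<notin> s" "cj \<notin> s" "ca \<notin> s" "cb \<notin> s"
    using str_i[OF sp] str_j[OF sp] str_a[OF sp] str_b[OF sp] ne by auto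
qed

lemma q_pairing: "pairing_on cD cq"
  unfolding pairing_on_def
proof (rule conjI; intro ballI)
  fix s assume s: "s \<in> cq"
  show "card s = 2 \<and> s \<subseteq> cD"
  proof (cases "s = {ca, cb} \<and> ca \<noteq> cj")
    case True
    then show ?thesis using distinct4 ia(3) jb(3) by (auto simp: cD_def)
  next
    case False
    then have ne: "s \<noteq> {ca, cb}" using s by (auto simp: cq_def split: if_splits)
    note o = old_disj[OF s ne]
    show ?thesis using o po_card[OF P o(1)] po_sub[OF P o(1)] by (auto simp: cD_def)
  qed
next
  fix x assume x: "x \<in> cD"
  then have x1: "x \<in> {1..n}" "x \<noteq> i" "x \<noteq> cj" by (auto simp: cD_def)
  obtain s where s: "s \<in> p" "x \<in> s" using po_ex[OF P x1(1)] by blast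
  show "\<exists>!s. s \<in> cq \<and> x \<in> s"
  proof (cases "ca = cj")
    case True
    then have cq: "cq = p - {{i, cj}}" using aj_case by (auto simp: cq_def insert_commute)
    have "s \<noteq> {i,cj}" using s x1 by auto
    then show ?thesis unfolding cq using s po_uniq[OF P] by blast
  next
    case False
    note d = distinct4[OF False]
    show ?thesis
    proof (cases "x = ca \<or> x = cb")
      case True
      have "{ca,cb} \<in> cq" using False by (simp add: cq_def)
      moreover have "t = {ca,cb}" if "t \<in> cq" "x \<in> t" for t
        using old_disj[OF that(1)] that True by blast
      ultimately show ?thesis using True by blast
    next
      case xn: False
      have "s \<noteq> {i,ca}" "s \<noteq> {cj,cb}" using s x1 xn by auto
      then have "s \<in> cq" using s by (simp add: cq_def)
      moreover have "t = s" if "t \<in> cq" "x \<in> t" for t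
      proof -
        have "t \<noteq> {ca,cb}" using that xn by auto
        then show ?thesis using old_disj[OF that(1)] po_uniq[OF P _ s(1)] that s by blast
      qed
      ultimately show ?thesis using s by blast
    qed
  qed
qed

lemma card_D: "card cD = n - 2"
proof -
  have "{i, cj} \<subseteq> {1..n}" using jin iin by auto
  moreover have "card {i, cj} = 2" using ij by simp
  ultimately show ?thesis unfolding cD_def by (simp add: card_Diff_subset)
qed

lemma r_mono: "x \<in> cD \<Longrightarrow> y \<in> cD \<Longrightarrow> x < y \<Longrightarrow> cr x < cr y"
proof -
  assume h: "x \<in> cD" "y \<in> cD" "x < y"
  have "{z \<in> cD. z \<le> x} \<subseteq> {z \<in> cD. z \<le> y}" using h by auto
  moreover have "y \<in> {z \<in> cD. z \<le> y}" "y \<notin> {z \<in> cD. z \<le> x}" using h by auto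
  ultimately have "{z \<in> cD. z \<le> x} \<subset> {z \<in> cD. z \<le> y}" by blast
  moreover have "finite {z \<in> cD. z \<le> y}" by (simp add: cD_def)
  ultimately show ?thesis unfolding cr_def by (simp add: psubset_card_mono)
qed

lemma r_less[simp]: "x \<in> cD \<Longrightarrow> y \<in> cD \<Longrightarrow> cr x < cr y \<longleftrightarrow> x < y"
  using r_mono[of x y] r_mono[of y x] by (cases x y rule: linorder_cases) auto
lemma r_le[simp]: "x \<in> cD \<Longrightarrow> y \<in> cD \<Longrightarrow> cr x \<le> cr y \<longleftrightarrow> x \<le> y"
  using r_less[of y x] by linarith

lemma r_inj: "inj_on cr cD"
proof (rule inj_onI)
  fix x y assume "x \<in> cD" "y \<in> cD" "cr x = cr y"
  then show "x = y" using r_less[of x y] r_less[of y x] by (cases x y rule: linorder_cases) auto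
qed

lemma r_bij: "bij_betw cr cD {1..n-2}"
proof -
  have sub: "cr ` cD \<subseteq> {1..n-2}"
  proof
    fix z assume "z \<in> cr ` cD"
    then obtain x where x: "x \<in> cD" "z = cr x" by blast
    have "{y \<in> cD. y \<le> x} \<subseteq> cD" by auto
    have fD: "finite cD" by (simp add: cD_def)
    then have "cr x \<le> n - 2" unfolding cr_def using card_D card_mono[OF fD \<open>{y \<in> cD. y \<le> x} \<subseteq> cD\<close>] by simp
    moreover have "cr x \<ge> 1"
    proof -
      have "x \<in> {y \<in> cD. y \<le> x}" using x(1) by simp
      moreover have "finite {y \<in> cD. y \<le> x}" using fD by simp
      ultimately have "card {y \<in> cD. y \<le> x} > 0" using card_gt_0_iff by blast
      then show ?thesis unfolding cr_def by simp
    qed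
    ultimately show "z \<in> {1..n-2}" using x by auto
  qed
  have "card (cr ` cD) = n - 2" using card_image[OF r_inj] card_D by simp
  then have "cr ` cD = {1..n-2}" using sub by (simp add: card_subset_eq)
  then show ?thesis using r_inj by (simp add: bij_betw_def)
qed

end



lemma card_xor: assumes "finite R"
  shows "card {t\<in>R. X t \<noteq> Y t} + 2 * card {t\<in>R. X t \<and> Y t} = card {t\<in>R. X t} + card {t\<in>R. Y t}"
proof -
  have fA: "finite {t\<in>R. X t}" "finite {t\<in>R. Y t}" using assms by auto
  have "card {t\<in>R. X t} + card {t\<in>R. Y t} = card ({t\<in>R. X t} \<union> {t\<in>R. Y t}) + card ({t\<in>R. X t} \<inter> {t\<in>R. Y t})"
    using card_Un_Int[OF fA] .
  moreover have "{t\<in>R. X t} \<union> {t\<in>R. Y t} = {t\<in>R. X t \<noteq> Y t} \<union> {t\<in>R. X t \<and> Y t}" by auto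
  moreover have "card ({t\<in>R. X t \<noteq> Y t} \<union> {t\<in>R. X t \<and> Y t}) = card {t\<in>R. X t \<noteq> Y t} + card {t\<in>R. X t \<and> Y t}"
    by (rule card_Un_disjoint) (use assms in auto)
  moreover have "{t\<in>R. X t} \<inter> {t\<in>R. Y t} = {t\<in>R. X t \<and> Y t}" by auto
  ultimately show ?thesis by simp
qed

lemma po_image: assumes "pairing_on D q" "bij_betw f D D'"
  shows "pairing_on D' ((\<lambda>s. f ` s) ` q)"
proof -
  have inj: "inj_on f D" and im: "f ` D = D'" using assms(2) by (auto simp: bij_betw_def)
  show ?thesis unfolding pairing_on_def
  proof (rule conjI; intro ballI)
    fix s' assume "s' \<in> (\<lambda>s. f ` s) ` q"
    then obtain s where s: "s \<in> q" "s' = f ` s" by blast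
    have "s \<subseteq> D" using po_sub[OF assms(1) s(1)] .
    then have "inj_on f s" using inj inj_on_subset by blast
    then have "card (f ` s) = card s" by (rule card_image)
    moreover have "f ` s \<subseteq> D'" using \<open>s \<subseteq> D\<close> im by blast
    ultimately show "card s' = 2 \<and> s' \<subseteq> D'" using s po_card[OF assms(1) s(1)] by simp
  next
    fix x' assume "x' \<in> D'"
    then obtain x where x: "x \<in> D" "x' = f x" using im by (metis imageE)
    obtain s where s: "s \<in> q" "x \<in> s" using po_ex[OF assms(1) x(1)] by blast
    have U: "t' = f ` s" if h: "t' \<in> (\<lambda>s. f ` s) ` q" "x' \<in> t'" for t'
    proof -
      obtain t where t: "t \<in> q" "t' = f ` t" using h(1) by blast
      obtain y where y: "y \<in> t" "x' = f y" using h(2) t by blast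
      have "y \<in> D" using po_sub[OF assms(1) t(1)] y by auto
      then have "y = x" using inj x y by (metis inj_onD)
      then have "t = s" using po_uniq[OF assms(1) t(1) s(1)] y s by simp
      then show ?thesis using t by simp
    qed
    have E: "f ` s \<in> (\<lambda>s. f ` s) ` q \<and> x' \<in> f ` s" using s x by auto
    show "\<exists>!s'. s' \<in> (\<lambda>s. f ` s) ` q \<and> x' \<in> s'"
      by (rule ex1I[of _ "f ` s"], rule E, use U in blast)
  qed
qed

context cap begin

lemma Q_pairing: "pairing_on {1..n-2} (capping n p i)"
  unfolding capping_eq by (rule po_image[OF q_pairing r_bij])

lemma sb_r: "x \<in> cD \<Longrightarrow> y \<in> cD \<Longrightarrow> z \<in> cD \<Longrightarrow> sb (cr x) (cr y) (cr z) = sb x y z"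
  by (simp add: strictly_between_def min_def max_def)

lemma cross_r: assumes "s \<in> cq" "t \<in> cq" shows "crosses (cr ` s) (cr ` t) = crosses s t"
proof -
  obtain x y where s: "s = {x,y}" using po_two[OF q_pairing assms(1)] by blast
  obtain z w where t: "t = {z,w}" using po_two[OF q_pairing assms(2)] by blast
  have "s \<subseteq> cD" "t \<subseteq> cD" using po_sub[OF q_pairing] assms by auto
  then show ?thesis using s t by (simp add: crosses_iff sb_r)
qed

lemma cnt_r: assumes "s \<in> cq" shows "cnt (capping n p i) (cr ` s) = cnt cq s"
proof -
  have inj: "inj_on (\<lambda>t. cr ` t) cq"
  proof (rule inj_onI)
    fix x y assume "x \<in> cq" "y \<in> cq" "cr ` x = cr ` y"
    then show "x = y" using inj_on_image_eq_iff[OF r_inj, of x y] po_sub[OF q_pairing] by blast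
  qed
  have "{t' \<in> capping n p i. t' \<noteq> cr ` s \<and> crosses (cr ` s) t'} = (\<lambda>t. cr ` t) ` {t \<in> cq. t \<noteq> s \<and> crosses s t}"
    unfolding capping_eq
  proof (intro set_eqI iffI)
    fix t' assume "t' \<in> {t' \<in> (\<lambda>s. cr ` s) ` cq. t' \<noteq> cr ` s \<and> crosses (cr ` s) t'}"
    then obtain t where t: "t \<in> cq" "t' = cr ` t" "t' \<noteq> cr ` s" "crosses (cr ` s) t'" by blast
    then show "t' \<in> (\<lambda>t. cr ` t) ` {t \<in> cq. t \<noteq> s \<and> crosses s t}"
      using cross_r[OF assms t(1)] by auto
  next
    fix t' assume "t' \<in> (\<lambda>t. cr ` t) ` {t \<in> cq. t \<noteq> s \<and> crosses s t}"
    then obtain t where t: "t \<in> cq" "t' = cr ` t" "t \<noteq> s" "crosses s t" by blast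
    have "t' \<noteq> cr ` s" using inj_onD[OF inj _ t(1) assms] t by auto
    then show "t' \<in> {t' \<in> (\<lambda>s. cr ` s) ` cq. t' \<noteq> cr ` s \<and> crosses (cr ` s) t'}"
      using cross_r[OF assms t(1)] t by auto
  qed
  moreover have "inj_on (\<lambda>t. cr ` t) {t \<in> cq. t \<noteq> s \<and> crosses s t}" using inj inj_on_subset by fastforce
  ultimately show ?thesis unfolding cnt_def by (simp add: card_image)
qed

end



lemma card_filter2: "u \<noteq> v \<Longrightarrow> card {t. (t = u \<or> t = v) \<and> Z t} = (if Z u then 1 else 0) + (if Z v then 1 else 0)"
proof -
  assume "u \<noteq> v"
  have "{t. (t = u \<or> t = v) \<and> Z t} = (if Z u then {u} else {}) \<union> (if Z v then {v} else {})" by auto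
  then show ?thesis using \<open>u \<noteq> v\<close> by simp
qed

lemma card_filter1: "card {t. t = u \<and> Z t} = (if Z u then 1 else 0)"
proof -
  have "{t. t = u \<and> Z t} = (if Z u then {u} else {})" by auto
  then show ?thesis by simp
qed

lemma par_helper: fixes a b c k m :: nat
  assumes "a + 2 * m = b + c" shows "even a = (even (b + k) = even (c + k))"
proof -
  have "even (a + 2 * m) = even (b + c)" using assms by simp
  then show ?thesis by auto
qed

context cap begin

lemma X_adj: assumes "c \<in> {1..n}" "d \<in> {1..n}" "c \<notin> {i, cj}" "d \<notin> {i, cj}"
  shows "sb c d i = sb c d cj"
  using sb_adj[OF iin assms[unfolded cj_def]] by (simp add: cj_def)

lemma ab_notin: "ca \<noteq> cj \<Longrightarrow> {ca, cb} \<notin> p"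
  using str_a distinct4 by (fastforce simp: doubleton_eq_iff)

lemma cnt_old: assumes "s \<in> cq" "s \<noteq> {ca, cb}"
  shows "even (cnt cq s) = even (cnt p s)"
proof -
  note o = old_disj[OF assms]
  obtain c d where s: "s = {c,d}" "c \<noteq> d" using po_two[OF P o(1)] by blast
  have cd: "c \<in> {1..n}" "d \<in> {1..n}" using po_sub[OF P o(1)] s by auto
  let ?X = "sb c d"
  have Xij: "?X i = ?X cj" using X_adj cd o s by auto
  show ?thesis
  proof (cases "ca = cj")
    case True
    then have cq: "cq = p - {{i, cj}}" using aj_case by (auto simp: cq_def insert_commute)
    have "\<not> crosses s {i, cj}" using Xij s by (simp add: crosses_iff)
    then have "{t \<in> cq. t \<noteq> s \<and> crosses s t} = {t \<in> p. t \<noteq> s \<and> crosses s t}" unfolding cq by auto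
    then show ?thesis by (simp add: cnt_def)
  next
    case False
    note d = distinct4[OF False]
    define A where "A = {t \<in> p. t \<noteq> s \<and> crosses s t}"
    define B where "B = A - {{i, ca}, {cj, cb}}"
    have fA: "finite A" using fin by (simp add: A_def)
    have fB: "finite B" using fA by (simp add: B_def)
    have e1: "{t \<in> cq. t \<noteq> s \<and> crosses s t} = B \<union> {t \<in> {{ca, cb}}. crosses s t}"
      using False assms(2) by (auto simp: cq_def A_def B_def)
    have n1: "{ca,cb} \<notin> B" using ab_notin[OF False] by (simp add: B_def A_def)
    have c1: "card {t \<in> cq. t \<noteq> s \<and> crosses s t} = card B + (if crosses s {ca,cb} then 1 else 0)"
      unfolding e1 using fB n1 by (subst card_Un_disjoint) (auto simp: card_filter1)
    have ne: "{i, ca} \<noteq> {cj, cb}" using d by (auto simp: doubleton_eq_iff)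
    have e2: "A = B \<union> {t \<in> {{i, ca}, {cj, cb}}. crosses s t}"
      using ia(1) jb(1) o s by (auto simp: A_def B_def)
    have c2: "card A = card B + ((if crosses s {i,ca} then 1 else 0) + (if crosses s {cj,cb} then 1 else 0))"
      apply (subst e2) using fB by (subst card_Un_disjoint) (auto simp: B_def card_filter2[OF ne])
    have cr: "crosses s {i,ca} = (?X i \<noteq> ?X ca)" "crosses s {cj,cb} = (?X cj \<noteq> ?X cb)"
      "crosses s {ca,cb} = (?X ca \<noteq> ?X cb)" using s by (simp_all add: crosses_iff)
    show ?thesis unfolding cnt_def A_def[symmetric] c1 c2 cr Xij
      by (cases "?X cj"; cases "?X ca"; cases "?X cb") auto
  qed
qed

lemma cnt_new: assumes "ca \<noteq> cj"
  shows "even (cnt cq {ca, cb}) = (even (cnt p {i, ca}) = even (cnt p {cj, cb}))"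
proof -
  note d = distinct4[OF assms]
  define R where "R = p - {{i, ca}, {cj, cb}}"
  have fR: "finite R" using fin by (simp add: R_def)
  have ne: "{i, ca} \<noteq> {cj, cb}" using d by (auto simp: doubleton_eq_iff)
  have e0: "{t \<in> cq. t \<noteq> {ca,cb} \<and> crosses {ca,cb} t} = {t \<in> R. crosses {ca,cb} t}"
    using assms ab_notin[OF assms] by (auto simp: cq_def R_def)
  have e1: "{t \<in> p. t \<noteq> {i,ca} \<and> crosses {i,ca} t} = {t \<in> R. crosses {i,ca} t} \<union> {t \<in> {{cj,cb}}. crosses {i,ca} t}"
    using jb(1) ne by (auto simp: R_def)
  have e2: "{t \<in> p. t \<noteq> {cj,cb} \<and> crosses {cj,cb} t} = {t \<in> R. crosses {cj,cb} t} \<union> {t \<in> {{i,ca}}. crosses {cj,cb} t}"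
    using ia(1) ne by (auto simp: R_def)
  have c1: "cnt p {i,ca} = card {t \<in> R. crosses {i,ca} t} + (if crosses {i,ca} {cj,cb} then 1 else 0)"
    unfolding cnt_def e1 using fR by (subst card_Un_disjoint) (auto simp: R_def card_filter1)
  have c2: "cnt p {cj,cb} = card {t \<in> R. crosses {cj,cb} t} + (if crosses {cj,cb} {i,ca} then 1 else 0)"
    unfolding cnt_def e2 using fR by (subst card_Un_disjoint) (auto simp: R_def card_filter1)
  have sym: "crosses {cj,cb} {i,ca} = crosses {i,ca} {cj,cb}"
    using crosses_sym4[of i ca cj cb] d by (auto simp: crosses_iff)
  have key: "crosses {ca,cb} t = (crosses {i,ca} t \<noteq> crosses {cj,cb} t)" if t: "t \<in> R" for t
  proof -
    have tp: "t \<in> p" using t by (simp add: R_def)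
    have tq: "t \<in> cq" "t \<noteq> {ca,cb}" using t ab_notin[OF assms] by (auto simp: cq_def R_def)
    note o = old_disj[OF tq]
    obtain c e where ce: "t = {c,e}" "c \<noteq> e" using po_two[OF P tp] by blast
    have cd: "c \<in> {1..n}" "e \<in> {1..n}" using po_sub[OF P tp] ce by auto
    have Xij: "sb c e i = sb c e cj" using X_adj cd o ce by auto
    have "distinct [ca, cb, c, e]" "distinct [i, ca, c, e]" "distinct [cj, cb, c, e]" using o ce d by auto
    then show ?thesis unfolding ce crosses_iff
      using crosses_sym4[of ca cb c e] crosses_sym4[of i ca c e] crosses_sym4[of cj cb c e] Xij
      by auto
  qed
  have "{t \<in> R. crosses {ca,cb} t} = {t \<in> R. crosses {i,ca} t \<noteq> crosses {cj,cb} t}" using key by auto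
  then have c0: "card {t \<in> R. crosses {ca,cb} t} + 2 * card {t \<in> R. crosses {i,ca} t \<and> crosses {cj,cb} t}
     = card {t \<in> R. crosses {i,ca} t} + card {t \<in> R. crosses {cj,cb} t}"
    using card_xor[OF fR] by simp
  have c00: "cnt cq {ca,cb} = card {t \<in> R. crosses {ca,cb} t}" unfolding cnt_def e0 ..
  show ?thesis unfolding c00 c1 c2 sym using par_helper[OF c0] by simp
qed

end



context cap begin

lemma ab_new: "s \<in> cq \<Longrightarrow> s = {ca, cb} \<Longrightarrow> ca \<noteq> cj"
  using aj_case by (auto simp: cq_def insert_commute)

lemma cap_En: assumes "\<forall>s\<in>p. even (cnt p s)" shows "capping n p i \<in> En (n - 2)"
  unfolding En_iff
proof (intro CollectI conjI ballI)
  show "pairing_on {1..n-2} (capping n p i)" by (rule Q_pairing)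
  fix s' assume "s' \<in> capping n p i"
  then obtain s where s: "s \<in> cq" "s' = cr ` s" unfolding capping_eq by blast
  have "even (cnt cq s)"
  proof (cases "s = {ca, cb}")
    case True
    then show ?thesis using cnt_new[OF ab_new[OF s(1) True]] assms ia(1) jb(1) by simp
  next
    case False
    then show ?thesis using cnt_old[OF s(1) False] assms old_disj[OF s(1) False] by simp
  qed
  then show "even (cnt (capping n p i) s')" using cnt_r[OF s(1)] s(2) by simp
qed

lemma surv: assumes "s \<in> p" "i \<notin> s" "cj \<notin> s"
  shows "s \<in> cq" "s \<noteq> {ca, cb}" "cr ` s \<in> capping n p i"
proof -
  have "s \<noteq> {i, ca}" "s \<noteq> {cj, cb}" using assms by auto
  then show sq: "s \<in> cq" using assms(1) by (simp add: cq_def)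
  show "s \<noteq> {ca, cb}" using str_a[OF assms(1)] assms(2) by auto
  show "cr ` s \<in> capping n p i" using sq unfolding capping_eq by blast
qed

end

lemma avoid2: assumes "n \<ge> 8" shows "\<exists>i\<in>{1..n}. i \<notin> {x, y} \<and> csucc n i \<notin> {x, y}"
proof -
  have c1: "csucc n 1 = 2" "csucc n 3 = 4" "csucc n 6 = 7" using assms by (auto simp: csucc_def)
  show ?thesis
  proof (cases "1 \<notin> {x,y} \<and> 2 \<notin> {x,y}")
    case True then show ?thesis using c1 assms by (intro bexI[of _ 1]) auto
  next
    case F1: False
    show ?thesis
    proof (cases "3 \<notin> {x,y} \<and> 4 \<notin> {x,y}")
      case True then show ?thesis using c1 assms by (intro bexI[of _ 3]) auto
    next
      case False then show ?thesis using F1 c1 assms by (intro bexI[of _ 6]) auto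
    qed
  qed
qed

lemma csucc_inj: assumes "i \<in> {1..n}" "i' \<in> {1..n}" "csucc n i = csucc n i'" shows "i = i'"
proof (cases "i = n")
  case True
  then show ?thesis using assms by (cases "i' = n") (auto simp: csucc_def)
next
  case False
  then show ?thesis using assms by (cases "i' = n") (auto simp: csucc_def)
qed

lemma avoid4: assumes "n \<ge> 8" "S \<subseteq> {1..n}" "card S = 4"
  shows "(\<exists>i\<in>{1..n}. i \<notin> S \<and> csucc n i \<notin> S) \<or> S = {1,3,5,7} \<or> S = {2,4,6,8}"
proof (cases "\<exists>i\<in>{1..n}. i \<notin> S \<and> csucc n i \<notin> S")
  case True then show ?thesis by blast
next
  case False
  then have H: "\<And>i. i \<in> {1..n} \<Longrightarrow> i \<notin> S \<Longrightarrow> csucc n i \<in> S" by blast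
  have "inj_on (csucc n) ({1..n} - S)" by (rule inj_onI) (use csucc_inj in blast)
  then have "card ({1..n} - S) \<le> card S"
    using H by (intro card_inj_on_le[of "csucc n"]) (auto simp: finite_subset[OF assms(2)])
  moreover have "card ({1..n} - S) = n - 4" using assms by (simp add: card_Diff_subset finite_subset)
  ultimately have n8: "n = 8" using assms by simp
  have cs: "csucc n 1 = 2" "csucc n 2 = 3" "csucc n 3 = 4" "csucc n 4 = 5" "csucc n 5 = 6"
    "csucc n 6 = 7" "csucc n 7 = 8" "csucc n 8 = 1" using n8 by (auto simp: csucc_def)
  have m: "i \<in> S \<or> csucc n i \<in> S" if "i \<in> {1..8}" for i using H that n8 by blast
  obtain r1 where r1: "r1 \<in> S" "r1 = 1 \<or> r1 = 2" using m[of 1] cs by auto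
  obtain r2 where r2: "r2 \<in> S" "r2 = 3 \<or> r2 = 4" using m[of 3] cs by auto
  obtain r3 where r3: "r3 \<in> S" "r3 = 5 \<or> r3 = 6" using m[of 5] cs by auto
  obtain r4 where r4: "r4 \<in> S" "r4 = 7 \<or> r4 = 8" using m[of 7] cs by auto
  have sub: "{r1,r2,r3,r4} \<subseteq> S" using r1 r2 r3 r4 by auto
  have "card {r1,r2,r3,r4} = 4" using r1(2) r2(2) r3(2) r4(2) by (elim disjE) simp_all
  then have SE: "S = {r1,r2,r3,r4}" using sub assms(3) card_subset_eq[OF finite_subset[OF assms(2)] sub] by simp
  have m2: "2 \<in> S \<or> 3 \<in> S" "4 \<in> S \<or> 5 \<in> S" "6 \<in> S \<or> 7 \<in> S" "8 \<in> S \<or> 1 \<in> S"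
    using m[of 2] m[of 4] m[of 6] m[of 8] cs by auto
  have "S = {1,3,5,7} \<or> S = {2,4,6,8}"
    using m2[unfolded SE] r1(2) r2(2) r3(2) r4(2) unfolding SE by (elim disjE) simp_all
  then show ?thesis by blast
qed


lemma alt_eq: assumes "x \<in> A" "x \<in> B" "A = {1,3,5,7::nat} \<or> A = {2,4,6,8}" "B = {1,3,5,7} \<or> B = {2,4,6,8}"
  shows "A = B"
  using assms(3,4)
proof (elim disjE)
  assume "A = {1,3,5,7}" "B = {2,4,6,8}"
  then show "A = B" using assms(1,2) by simp linarith
next
  assume "A = {2,4,6,8}" "B = {1,3,5,7}"
  then show "A = B" using assms(1,2) by simp linarith
qed simp_all

lemma crosses_self: "s = {x,y} \<Longrightarrow> \<not> crosses s s"
  by (simp add: crosses_iff strictly_between_def)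

theorem lemma4p4:
  fixes k l :: nat and p :: "nat set set"
  assumes "p \<in> P k l - N k l" and "k + l \<ge> 8"
  shows "(p \<notin> E k l \<longrightarrow> (\<exists>i\<in>{1..k+l}. capping (k + l) p i \<notin> En (k + l - 2)))
       \<and> (p \<in> E k l - N k l \<longrightarrow>
            (\<exists>i\<in>{1..k+l}. capping (k + l) p i \<in> En (k + l - 2) - Nn (k + l - 2)))"
proof -
  have Pp: "pairing_on {1..k+l} p" using assms(1) by (simp add: P_def Pn_def is_pairing_on)
  have n8: "k + l \<ge> 8" by (rule assms(2))
  have finp: "finite p" using po_finite[OF _ Pp] by simp
  show ?thesis
  proof (intro conjI impI)
    assume "p \<notin> E k l"
    then obtain s where s: "s \<in> p" "odd (cnt p s)" using Pp unfolding E_def En_iff by auto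
    obtain x y where xy: "s = {x,y}" using po_two[OF Pp s(1)] by blast
    obtain i where i: "i \<in> {1..k+l}" "i \<notin> {x,y}" "csucc (k+l) i \<notin> {x,y}" using avoid2[OF n8] by blast
    interpret c: cap "k+l" p i using Pp n8 i(1) by unfold_locales auto
    have "i \<notin> s" "c.cj \<notin> s" using i xy by (auto simp: c.cj_def)
    note sv = c.surv[OF s(1) this]
    have "odd (cnt (capping (k+l) p i) (c.cr ` s))"
      using c.cnt_r[OF sv(1)] c.cnt_old[OF sv(1) sv(2)] s(2) by simp
    then have "capping (k+l) p i \<notin> En (k+l-2)" using sv(3) unfolding En_iff by auto
    then show "\<exists>i\<in>{1..k+l}. capping (k+l) p i \<notin> En (k+l-2)" using i(1) by blast
  next
    assume pe: "p \<in> E k l - N k l"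
    then have ev: "\<forall>s\<in>p. even (cnt p s)" using Pp unfolding E_def En_iff by auto
    obtain s t where st: "s \<in> p" "t \<in> p" "crosses s t" using pe Pp unfolding N_def Nn_iff by auto
    obtain x y where xy: "s = {x,y}" using po_two[OF Pp st(1)] by blast
    have ts: "t \<noteq> s" using crosses_self[OF xy] st(3) by auto
    have disj: "\<And>u. u \<in> p \<Longrightarrow> u \<noteq> s \<Longrightarrow> s \<inter> u = {}" using po_uniq[OF Pp] st(1) by blast
    obtain w where w: "w \<in> p" "w \<noteq> s" "w \<noteq> t" "crosses s w"
    proof -
      have "\<exists>w. w \<in> p \<and> w \<noteq> s \<and> w \<noteq> t \<and> crosses s w"
      proof (rule ccontr)
        assume "\<not> ?thesis"
        then have "{u \<in> p. u \<noteq> s \<and> crosses s u} = {t}" using st ts by auto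
        then have "cnt p s = 1" by (simp add: cnt_def)
        moreover have "even (cnt p s)" using ev st(1) by blast
        ultimately show False by simp
      qed
      then show ?thesis using that by blast
    qed
    have c4: "card (s \<union> u) = 4" if "u \<in> p" "u \<noteq> s" for u
    proof -
      have "finite s" "finite u" "card s = 2" "card u = 2"
        using po_card[OF Pp] that st(1) card_ge_0_finite by force+
      then show ?thesis using disj[OF that] by (simp add: card_Un_disjoint)
    qed
    have sub: "s \<union> u \<subseteq> {1..k+l}" if "u \<in> p" for u using po_sub[OF Pp] that st(1) by blast
    have "\<exists>u\<in>{t,w}. \<exists>i\<in>{1..k+l}. i \<notin> s \<union> u \<and> csucc (k+l) i \<notin> s \<union> u"
    proof (rule ccontr)
      assume "\<not> ?thesis"
      then have A: "s \<union> t = {1,3,5,7} \<or> s \<union> t = {2,4,6,8}" "s \<union> w = {1,3,5,7} \<or> s \<union> w = {2,4,6,8}"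
        using avoid4[OF n8 sub[OF st(2)] c4[OF st(2) ts]] avoid4[OF n8 sub[OF w(1)] c4[OF w(1) w(2)]] by blast+
      have "x \<in> s \<union> t" "x \<in> s \<union> w" using xy by simp_all
      then have e: "s \<union> t = s \<union> w" by (rule alt_eq[OF _ _ A(1) A(2)])
      have "t = (s \<union> t) - s" "w = (s \<union> w) - s" using disj[OF st(2) ts] disj[OF w(1) w(2)] by blast+
      then have "t = w" using e by simp
      then show False using w(3) by simp
    qed
    then obtain u i where u: "u \<in> p" "u \<noteq> s" "crosses s u" and i: "i \<in> {1..k+l}" "i \<notin> s \<union> u" "csucc (k+l) i \<notin> s \<union> u"
      using st ts w by blast
    interpret c: cap "k+l" p i using Pp n8 i(1) by unfold_locales auto
    have "i \<notin> s" "c.cj \<notin> s" "i \<notin> u" "c.cj \<notin> u" using i by (auto simp: c.cj_def)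
    note sv = c.surv[OF st(1) \<open>i \<notin> s\<close> \<open>c.cj \<notin> s\<close>] and uv = c.surv[OF u(1) \<open>i \<notin> u\<close> \<open>c.cj \<notin> u\<close>]
    have "crosses (c.cr ` s) (c.cr ` u)" using c.cross_r[OF sv(1) uv(1)] u(3) by simp
    then have "capping (k+l) p i \<notin> Nn (k+l-2)" using sv(3) uv(3) unfolding Nn_iff by blast
    moreover have "capping (k+l) p i \<in> En (k+l-2)" by (rule c.cap_En[OF ev])
    ultimately show "\<exists>i\<in>{1..k+l}. capping (k+l) p i \<in> En (k+l-2) - Nn (k+l-2)" using i(1) by blast
  qed
qed


end
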